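(* Let $\rho_1,\dots,\rho_T,\sigma_1,\dots,\sigma_T$ be $d$-dimensional quantum states, $\varrho=\rho_1\otimes\cdots\otimes\rho_T\otimes\sigma_1\otimes\cdots\otimes\sigma_T$, $\rho_{\mathrm{avg}}=\frac1T\sum_t\rho_t$, $\sigma_{\mathrm{avg}}=\frac1T\sum_t\sigma_t$, $\mu=\mathrm{Tr}[(\rho_{\mathrm{avg}}-\sigma_{\mathrm{avg}})^2]$. Define on $(\mathbb C^d)^{\otimes 2T}$ $$Z=\frac1{T^2}\sum_{1\le i\ne j\le T}S^A_{ij}+\frac1{T^2}\sum_{1\le i\ne j\le T}S^B_{ij}-\frac2{T^2}\sum_{1\le i,j\le T}S^{AB}_{ij},$$ where $S^A_{ij}$ swaps tensor components $i$ and $j$, $S^B_{ij}$ swaps components $T+i$ and $T+j$, and $S^{AB}_{ij}$ swaps components $i$ and $T+j$. Then $|\mathbb E_\varrho[Z]-\mu|\le\frac2T$, and there is a universal constant $K$ such that $\mathrm{Var}_\varrho[Z]\le\frac{16}T\mu+\frac K{T^2}$.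
   Context: $\mathbb E_\varrho[Y]=\mathrm{Tr}[\varrho Y]$ and $\mathrm{Var}_\varrho[Y]=\mathbb E_\varrho[Y^2]-\mathbb E_\varrho[Y]^2$. *)

theory Defs
  imports "Jordan_Normal_Form.Matrix" "HOL-Combinatorics.Transposition"
begin

(* Complex_Order is imported via Jordan_Normal_Form: for complex numbers
   0 \<le> z means z is real and nonnegative. *)

definition psd_mat :: "nat \<Rightarrow> complex mat \<Rightarrow> bool" where
  "psd_mat d A \<longleftrightarrow> A \<in> carrier_mat d d \<and>
     (\<forall>v :: nat \<Rightarrow> complex. 0 \<le> (\<Sum>i<d. \<Sum>j<d. cnj (v i) * A $$ (i,j) * v j))"

definition mat_trace :: "complex mat \<Rightarrow> complex" where
  "mat_trace A = (\<Sum>i<dim_row A. A $$ (i,i))"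

definition density_mat :: "nat \<Rightarrow> complex mat \<Rightarrow> bool" where
  "density_mat d A \<longleftrightarrow> psd_mat d A \<and> mat_trace A = 1"

text \<open>Operators on (C^d)^{\<otimes> n}, written in the computational product basis
 |x_0 ... x_{n-1}>, indexed by tuples x : {0..<n} \<rightarrow> {0..<d}.\<close>
type_synonym tensor_op = "(nat \<Rightarrow> nat) \<Rightarrow> (nat \<Rightarrow> nat) \<Rightarrow> complex"

definition tuples :: "nat \<Rightarrow> nat \<Rightarrow> (nat \<Rightarrow> nat) set" where
  "tuples d n = PiE {..<n} (\<lambda>_. {..<d})"

definition tensor_prod :: "nat \<Rightarrow> (nat \<Rightarrow> complex mat) \<Rightarrow> tensor_op" where
  "tensor_prod n A = (\<lambda>x y. \<Prod>k<n. A k $$ (x k, y k))"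

definition swap_op :: "nat \<Rightarrow> nat \<Rightarrow> tensor_op" where
  "swap_op a b = (\<lambda>x y. if x = y \<circ> transpose a b then 1 else 0)"

definition op_mult :: "nat \<Rightarrow> nat \<Rightarrow> tensor_op \<Rightarrow> tensor_op \<Rightarrow> tensor_op" where
  "op_mult d n X Y = (\<lambda>x z. \<Sum>y\<in>tuples d n. X x y * Y y z)"

definition op_trace :: "nat \<Rightarrow> nat \<Rightarrow> tensor_op \<Rightarrow> complex" where
  "op_trace d n X = (\<Sum>x\<in>tuples d n. X x x)"

definition expect :: "nat \<Rightarrow> nat \<Rightarrow> tensor_op \<Rightarrow> tensor_op \<Rightarrow> complex" where
  "expect d n \<rho> Y = op_trace d n (op_mult d n \<rho> Y)"

definition variance_op :: "nat \<Rightarrow> nat \<Rightarrow> tensor_op \<Rightarrow> tensor_op \<Rightarrow> complex" where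
  "variance_op d n \<rho> Y = expect d n \<rho> (op_mult d n Y Y) - (expect d n \<rho> Y)^2"

text \<open>The 2T-fold state rho_0 \<otimes> ... \<otimes> rho_{T-1} \<otimes> sigma_0 \<otimes> ... \<otimes> sigma_{T-1}
 (0-based indices).\<close>
definition joint_state :: "nat \<Rightarrow> (nat \<Rightarrow> complex mat) \<Rightarrow> (nat \<Rightarrow> complex mat) \<Rightarrow> tensor_op" where
  "joint_state T \<rho> \<sigma> = tensor_prod (2*T) (\<lambda>k. if k < T then \<rho> k else \<sigma> (k - T))"

definition Z_op :: "nat \<Rightarrow> tensor_op" where
  "Z_op T = (\<lambda>x y.
      (1 / of_nat T ^ 2) * (\<Sum>i<T. \<Sum>j<T. if i \<noteq> j then swap_op i j x y else 0)
    + (1 / of_nat T ^ 2) * (\<Sum>i<T. \<Sum>j<T. if i \<noteq> j then swap_op (T+i) (T+j) x y else 0)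
    - (2 / of_nat T ^ 2) * (\<Sum>i<T. \<Sum>j<T. swap_op i (T+j) x y))"

definition avg_state :: "nat \<Rightarrow> nat \<Rightarrow> (nat \<Rightarrow> complex mat) \<Rightarrow> complex mat" where
  "avg_state d T \<rho> = mat d d (\<lambda>(i,j). (\<Sum>t<T. \<rho> t $$ (i,j)) / of_nat T)"

definition mu_val :: "nat \<Rightarrow> nat \<Rightarrow> (nat \<Rightarrow> complex mat) \<Rightarrow> (nat \<Rightarrow> complex mat) \<Rightarrow> complex" where
  "mu_val d T \<rho> \<sigma> = (let D = avg_state d T \<rho> - avg_state d T \<sigma> in mat_trace (D * D))"

end

theory Submission
  imports Defs
begin

definition okp :: "nat \<Rightarrow> (nat \<Rightarrow> nat) \<Rightarrow> bool" where
  "okp n p \<longleftrightarrow> (\<forall>k<n. p k < n) \<and> (\<forall>k. n \<le> k \<longrightarrow> p k = k)"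

lemma okp_transpose: "a < n \<Longrightarrow> b < n \<Longrightarrow> okp n (transpose a b)"
  unfolding okp_def transpose_def by auto

lemma okp_comp: "okp n f \<Longrightarrow> okp n g \<Longrightarrow> okp n (f \<circ> g)"
  unfolding okp_def by auto

lemma tuples_comp: "x \<in> tuples d n \<Longrightarrow> okp n p \<Longrightarrow> x \<circ> p \<in> tuples d n"
  unfolding tuples_def okp_def PiE_def Pi_def extensional_def by auto

lemma tuples_lt: "x \<in> tuples d n \<Longrightarrow> k < n \<Longrightarrow> x k < d"
  unfolding tuples_def by auto

lemma finite_tuples[simp]: "finite (tuples d n)"
  unfolding tuples_def by (rule finite_PiE) auto

lemma sum_PiE_insert:
  assumes "finite S" "a \<notin> S"
  shows "(\<Sum>u\<in>PiE (insert a S) B. f u) = (\<Sum>v\<in>B a. \<Sum>u\<in>PiE S B. f (u(a:=v)))"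
proof -
  have "(\<Sum>u\<in>PiE (insert a S) B. f u) = (\<Sum>(v,u)\<in>B a \<times> PiE S B. f (u(a:=v)))"
    using assms
    by (intro sum.reindex_bij_witness[of _ "\<lambda>(v,u). u(a := v)" "\<lambda>g. (g a, g(a := undefined))"])
       (auto simp: PiE_def extensional_def)
  also have "\<dots> = (\<Sum>v\<in>B a. \<Sum>u\<in>PiE S B. f (u(a:=v)))"
    by (subst sum.cartesian_product) auto
  finally show ?thesis .
qed

definition Qp :: "nat \<Rightarrow> nat \<Rightarrow> (nat \<Rightarrow> complex mat) \<Rightarrow> (nat \<Rightarrow> nat) \<Rightarrow> complex" where
  "Qp d n al p = (\<Sum>x\<in>tuples d n. tensor_prod n al x (x \<circ> p))"

lemma Qfact:
  assumes S: "S \<subseteq> {..<n}" and fx: "\<forall>k. k \<notin> S \<longrightarrow> p k = k" and inv: "\<forall>k\<in>S. p k \<in> S"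
    and tr: "\<forall>k<n. k \<notin> S \<longrightarrow> (\<Sum>v<d. al k $$ (v,v)) = 1"
  shows "Qp d n al p = (\<Sum>u\<in>PiE S (\<lambda>_. {..<d}). \<Prod>k\<in>S. al k $$ (u k, u (p k)))"
proof -
  have finS: "finite S" using S finite_subset by blast
  define H where "H u k v = (if k \<in> S then (if v = u k then 1 else 0) else al k $$ (v,v))"
    for u :: "nat \<Rightarrow> nat" and k v
  define c where "c u = (\<Prod>k\<in>S. al k $$ (u k, u (p k)))" for u
  have pt: "tensor_prod n al x (x \<circ> p) = (\<Sum>u\<in>PiE S (\<lambda>_. {..<d}). c u * (\<Prod>k<n. H u k (x k)))"
    if x: "x \<in> tuples d n" for x
  proof -
    define u0 where "u0 = restrict x S"
    have u0in: "u0 \<in> PiE S (\<lambda>_. {..<d})"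
      using x S unfolding u0_def tuples_def by auto
    have split: "(\<Prod>k<n. f k) = (\<Prod>k\<in>S. f k) * (\<Prod>k\<in>{..<n} - S. f k)" for f :: "nat \<Rightarrow> complex"
      using S by (metis finite_lessThan prod.subset_diff mult.commute)
    have "tensor_prod n al x (x \<circ> p) = (\<Prod>k<n. al k $$ (x k, x (p k)))"
      by (simp add: tensor_prod_def)
    also have "\<dots> = (\<Prod>k\<in>S. al k $$ (x k, x (p k))) * (\<Prod>k\<in>{..<n} - S. al k $$ (x k, x k))"
      by (subst split) (use fx in auto)
    also have "(\<Prod>k\<in>S. al k $$ (x k, x (p k))) = c u0"
      unfolding c_def u0_def using inv by (intro prod.cong) auto
    also have "(\<Prod>k\<in>{..<n} - S. al k $$ (x k, x k)) = (\<Prod>k<n. H u0 k (x k))"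
      by (subst split) (simp add: H_def u0_def)
    also have "c u0 * (\<Prod>k<n. H u0 k (x k)) = (\<Sum>u\<in>PiE S (\<lambda>_. {..<d}). c u * (\<Prod>k<n. H u k (x k)))"
    proof -
      have "\<forall>u\<in>PiE S (\<lambda>_. {..<d}) - {u0}. c u * (\<Prod>k<n. H u k (x k)) = 0"
      proof
        fix u assume u: "u \<in> PiE S (\<lambda>_. {..<d}) - {u0}"
        then have "u \<noteq> u0" by auto
        then obtain k where k0: "u k \<noteq> u0 k" by auto
        have kS: "k \<in> S"
        proof (rule ccontr)
          assume "k \<notin> S"
          then have "u k = undefined" "u0 k = undefined" using u u0in by (auto simp: PiE_def extensional_def)
          then show False using k0 by simp
        qed
        have k: "k \<in> S" "u k \<noteq> x k" using kS k0 by (auto simp: u0_def)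
        have "H u k (x k) = 0" using k by (simp add: H_def)
        moreover have "k < n" using k S by auto
        ultimately have "(\<Prod>k<n. H u k (x k)) = 0"
          by (intro prod_zero) auto
        then show "c u * (\<Prod>k<n. H u k (x k)) = 0" by simp
      qed
      then show ?thesis
        using u0in by (subst sum.remove[of _ u0]) (auto intro!: sum.neutral simp: finite_PiE finS)
    qed
    finally show ?thesis .
  qed
  have "Qp d n al p = (\<Sum>x\<in>tuples d n. \<Sum>u\<in>PiE S (\<lambda>_. {..<d}). c u * (\<Prod>k<n. H u k (x k)))"
    unfolding Qp_def using pt by (intro sum.cong) auto
  also have "\<dots> = (\<Sum>u\<in>PiE S (\<lambda>_. {..<d}). c u * (\<Sum>x\<in>tuples d n. \<Prod>k<n. H u k (x k)))"
    by (subst sum.swap) (simp add: sum_distrib_left)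
  also have "\<dots> = (\<Sum>u\<in>PiE S (\<lambda>_. {..<d}). c u)"
  proof (intro sum.cong refl)
    fix u assume u: "u \<in> PiE S (\<lambda>_. {..<d})"
    have "(\<Sum>x\<in>tuples d n. \<Prod>k<n. H u k (x k)) = (\<Prod>k<n. \<Sum>v<d. H u k v)"
      unfolding tuples_def by (subst prod_sum_PiE) auto
    also have "\<dots> = 1"
    proof (intro prod.neutral ballI)
      fix k assume k: "k \<in> {..<n}"
      show "(\<Sum>v<d. H u k v) = 1"
      proof (cases "k \<in> S")
        case True
        then have "u k < d" using u by auto
        then show ?thesis using True by (simp add: H_def)
      next
        case False
        then show ?thesis using tr k by (simp add: H_def)
      qed
    qed
    finally show "c u * (\<Sum>x\<in>tuples d n. \<Prod>k<n. H u k (x k)) = c u" by simp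
  qed
  finally show ?thesis unfolding c_def .
qed


definition g2 :: "nat \<Rightarrow> complex mat \<Rightarrow> complex mat \<Rightarrow> complex" where
  "g2 d X Y = (\<Sum>i<d. \<Sum>j<d. X $$ (i,j) * Y $$ (j,i))"

definition c3 :: "nat \<Rightarrow> complex mat \<Rightarrow> complex mat \<Rightarrow> complex mat \<Rightarrow> complex" where
  "c3 d X Y W = (\<Sum>i<d. \<Sum>j<d. \<Sum>l<d. X $$ (i,j) * Y $$ (j,l) * W $$ (l,i))"

lemma Q_id:
  assumes tr: "\<forall>k<n. (\<Sum>v<d. al k $$ (v,v)) = 1"
  shows "Qp d n al id = 1"
  using Qfact[where S="{}" and p=id and n=n and d=d and al=al] tr by simp

lemma Q_tr:
  assumes tr: "\<forall>k<n. (\<Sum>v<d. al k $$ (v,v)) = 1"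
    and ab: "a < n" "b < n" "a \<noteq> b"
    and p: "p a = b" "p b = a" "\<forall>k. k \<noteq> a \<and> k \<noteq> b \<longrightarrow> p k = k"
  shows "Qp d n al p = g2 d (al a) (al b)"
proof -
  have "Qp d n al p = (\<Sum>u\<in>PiE {a,b} (\<lambda>_. {..<d}). \<Prod>k\<in>{a,b}. al k $$ (u k, u (p k)))"
    using ab p tr by (intro Qfact) auto
  also have "\<dots> = g2 d (al a) (al b)"
    using ab p by (simp add: sum_PiE_insert g2_def)
  finally show ?thesis .
qed

lemma Q_3:
  assumes tr: "\<forall>k<n. (\<Sum>v<d. al k $$ (v,v)) = 1"
    and ab: "a < n" "b < n" "e < n" "a \<noteq> b" "a \<noteq> e" "b \<noteq> e"
    and p: "p a = b" "p b = e" "p e = a" "\<forall>k. k \<noteq> a \<and> k \<noteq> b \<and> k \<noteq> e \<longrightarrow> p k = k"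
  shows "Qp d n al p = c3 d (al a) (al b) (al e)"
proof -
  have "Qp d n al p = (\<Sum>u\<in>PiE {a,b,e} (\<lambda>_. {..<d}). \<Prod>k\<in>{a,b,e}. al k $$ (u k, u (p k)))"
    using ab p tr by (intro Qfact) auto
  also have "\<dots> = c3 d (al a) (al b) (al e)"
    using ab p by (simp add: sum_PiE_insert c3_def mult_ac)
  finally show ?thesis .
qed

lemma Q_22:
  assumes tr: "\<forall>k<n. (\<Sum>v<d. al k $$ (v,v)) = 1"
    and ab: "a < n" "b < n" "c < n" "e < n" "a \<noteq> b" "a \<noteq> c" "a \<noteq> e" "b \<noteq> c" "b \<noteq> e" "c \<noteq> e"
    and p: "p a = b" "p b = a" "p c = e" "p e = c" "\<forall>k. k \<noteq> a \<and> k \<noteq> b \<and> k \<noteq> c \<and> k \<noteq> e \<longrightarrow> p k = k"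
  shows "Qp d n al p = g2 d (al a) (al b) * g2 d (al c) (al e)"
proof -
  have "Qp d n al p = (\<Sum>u\<in>PiE {a,b,c,e} (\<lambda>_. {..<d}). \<Prod>k\<in>{a,b,c,e}. al k $$ (u k, u (p k)))"
    using ab p tr by (intro Qfact) auto
  also have "\<dots> = (\<Sum>v<d. \<Sum>va<d. al a $$ (v,va) * al b $$ (va,v)) * (\<Sum>vb<d. \<Sum>vc<d. al c $$ (vb,vc) * al e $$ (vc,vb))"
    using ab p apply (simp add: sum_PiE_insert) apply (simp only: sum_distrib_right) apply (simp only: sum_distrib_left) by (simp add: mult_ac)
  also have "\<dots> = g2 d (al a) (al b) * g2 d (al c) (al e)"
    by (simp add: g2_def)
  finally show ?thesis .
qed


section \<open>Density matrices\<close>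

lemma sum_two:
  fixes d :: nat
  assumes "i < d" "j < d" "i \<noteq> j" "\<forall>l<d. l \<noteq> i \<longrightarrow> l \<noteq> j \<longrightarrow> f l = 0"
  shows "(\<Sum>l<d. f l) = f i + f j"
proof -
  have "(\<Sum>l<d. f l) = (\<Sum>l\<in>{i,j}. f l)"
    apply (rule sum.mono_neutral_right) using assms by auto
  then show ?thesis using assms by simp
qed

lemma sum_one:
  fixes d :: nat
  assumes "i < d" "\<forall>l<d. l \<noteq> i \<longrightarrow> f l = 0"
  shows "(\<Sum>l<d. f l) = f i"
proof -
  have "(\<Sum>l<d. f l) = (\<Sum>l\<in>{i}. f l)"
    apply (rule sum.mono_neutral_right) using assms by auto
  then show ?thesis using assms by simp
qed

definition qf :: "nat \<Rightarrow> complex mat \<Rightarrow> (nat \<Rightarrow> complex) \<Rightarrow> complex" where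
  "qf d A v = (\<Sum>i<d. \<Sum>j<d. cnj (v i) * A $$ (i,j) * v j)"

lemma qf_two:
  assumes "i < d" "j < d" "i \<noteq> j"
  shows "qf d A (\<lambda>k. if k = i then x else if k = j then y else 0) =
    cnj x * (A $$ (i,i) * x + A $$ (i,j) * y) + cnj y * (A $$ (j,i) * x + A $$ (j,j) * y)"
proof -
  define v where "v = (\<lambda>k. if k = i then x else if k = j then y else 0)"
  have inner: "(\<Sum>l<d. cnj (v k) * A $$ (k,l) * v l) = cnj (v k) * (A $$ (k,i) * x + A $$ (k,j) * y)" for k
    using assms by (subst sum_two[of i d j]) (auto simp: v_def algebra_simps)
  have "qf d A v = (\<Sum>k<d. cnj (v k) * (A $$ (k,i) * x + A $$ (k,j) * y))"
    unfolding qf_def using inner by simp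
  also have "\<dots> = cnj x * (A $$ (i,i) * x + A $$ (i,j) * y) + cnj y * (A $$ (j,i) * x + A $$ (j,j) * y)"
    using assms by (subst sum_two[of i d j]) (auto simp: v_def)
  finally show ?thesis unfolding v_def .
qed

lemma qf_one:
  assumes "i < d"
  shows "qf d A (\<lambda>k. if k = i then 1 else 0) = A $$ (i,i)"
proof -
  define v where "v = (\<lambda>k. if k = i then 1 else 0 :: complex)"
  have inner: "(\<Sum>l<d. cnj (v k) * A $$ (k,l) * v l) = cnj (v k) * A $$ (k,i)" for k
    using assms by (subst sum_one[of i d]) (auto simp: v_def)
  have "qf d A v = (\<Sum>k<d. cnj (v k) * A $$ (k,i))"
    unfolding qf_def using inner by simp
  also have "\<dots> = A $$ (i,i)"
    using assms by (subst sum_one[of i d]) (auto simp: v_def)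
  finally show ?thesis unfolding v_def .
qed

lemma dens_qf: "density_mat d A \<Longrightarrow> Re (qf d A v) \<ge> 0 \<and> Im (qf d A v) = 0"
  unfolding density_mat_def psd_mat_def qf_def less_eq_complex_def by auto

lemma dens_diag:
  assumes "density_mat d A" "i < d"
  shows "Im (A $$ (i,i)) = 0" "Re (A $$ (i,i)) \<ge> 0"
  using dens_qf[OF assms(1), of "\<lambda>k. if k = i then 1 else 0"] qf_one[OF assms(2), of A] by auto

lemma dens_herm:
  assumes A: "density_mat d A" and ij: "i < d" "j < d"
  shows "A $$ (j,i) = cnj (A $$ (i,j))"
proof (cases "i = j")
  case True
  then show ?thesis using dens_diag[OF A ij(1)] by (simp add: complex_eq_iff)
next
  case False
  have d1: "Im (A $$ (i,i)) = 0" "Im (A $$ (j,j)) = 0" using dens_diag A ij by auto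
  have "Im (qf d A (\<lambda>k. if k = i then 1 else if k = j then 1 else 0)) = 0" using dens_qf[OF A] by blast
  then have h1: "Im (A $$ (i,j)) + Im (A $$ (j,i)) = 0"
    using qf_two[OF ij False, of A 1 1] d1 by simp
  have "Im (qf d A (\<lambda>k. if k = i then 1 else if k = j then \<i> else 0)) = 0" using dens_qf[OF A] by blast
  then have h2: "Re (A $$ (i,j)) - Re (A $$ (j,i)) = 0"
    using qf_two[OF ij False, of A 1 \<i>] d1 by (simp add: algebra_simps)
  show ?thesis using h1 h2 by (simp add: complex_eq_iff)
qed

lemma dens_minor:
  assumes A: "density_mat d A" and ij: "i < d" "j < d"
  shows "(cmod (A $$ (i,j)))^2 \<le> Re (A $$ (i,i)) * Re (A $$ (j,j))"
proof (cases "i = j")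
  case True
  have "A $$ (i,i) = of_real (Re (A $$ (i,i)))" using dens_diag[OF A ij(1)] by (simp add: complex_eq_iff)
  then have "cmod (A $$ (i,i)) = abs (Re (A $$ (i,i)))" by (metis norm_of_real)
  then show ?thesis using True by (simp add: power2_eq_square)
next
  case False
  define c where "c = A $$ (i,j)"
  define p where "p = Re (A $$ (i,i))"
  define r where "r = Re (A $$ (j,j))"
  have Aii: "A $$ (i,i) = of_real p" using dens_diag[OF A ij(1)] by (simp add: complex_eq_iff p_def)
  have Ajj: "A $$ (j,j) = of_real r" using dens_diag[OF A ij(2)] by (simp add: complex_eq_iff r_def)
  have Aji: "A $$ (j,i) = cnj c" using dens_herm[OF A ij] c_def by simp
  have p0: "p \<ge> 0" "r \<ge> 0" using dens_diag A ij p_def r_def by auto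
  have cc: "c * cnj c = of_real ((cmod c)^2)" by (rule complex_norm_square[symmetric])
  have q1: "Re (qf d A (\<lambda>k. if k = i then of_real r else if k = j then - cnj c else 0)) = r * (p * r - (cmod c)^2)"
  proof -
    have "qf d A (\<lambda>k. if k = i then of_real r else if k = j then - cnj c else 0)
       = of_real r * (of_real p * of_real r - c * cnj c)"
      using qf_two[OF ij False, of A "of_real r" "- cnj c"] Aii Ajj Aji c_def by (simp add: algebra_simps)
    also have "\<dots> = of_real (r * (p * r - (cmod c)^2))" using cc by simp
    finally show ?thesis by simp
  qed
  have q2: "Re (qf d A (\<lambda>k. if k = i then - c else if k = j then of_real p else 0)) = p * (p * r - (cmod c)^2)"
  proof -
    have "qf d A (\<lambda>k. if k = i then - c else if k = j then of_real p else 0)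
       = of_real p * (of_real p * of_real r - c * cnj c)"
      using qf_two[OF ij False, of A "- c" "of_real p"] Aii Ajj Aji c_def by (simp add: algebra_simps)
    also have "\<dots> = of_real (p * (p * r - (cmod c)^2))" using cc by simp
    finally show ?thesis by simp
  qed
  have q3: "Re (qf d A (\<lambda>k. if k = i then 1 else if k = j then - cnj c else 0)) = p - 2 * (cmod c)^2 + r * (cmod c)^2"
  proof -
    have "qf d A (\<lambda>k. if k = i then 1 else if k = j then - cnj c else 0)
       = of_real p - 2 * (c * cnj c) + of_real r * (c * cnj c)"
      using qf_two[OF ij False, of A 1 "- cnj c"] Aii Ajj Aji c_def by (simp add: algebra_simps)
    also have "\<dots> = of_real (p - 2 * (cmod c)^2 + r * (cmod c)^2)" using cc by simp
    finally show ?thesis by simp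
  qed
  have g1: "r * (p * r - (cmod c)^2) \<ge> 0" using q1 dens_qf[OF A] by metis
  have g2: "p * (p * r - (cmod c)^2) \<ge> 0" using q2 dens_qf[OF A] by metis
  have g3: "p - 2 * (cmod c)^2 + r * (cmod c)^2 \<ge> 0" using q3 dens_qf[OF A] by metis
  have "(cmod c)^2 \<le> p * r"
  proof (cases "r > 0")
    case True
    then show ?thesis using g1 by (simp add: zero_le_mult_iff)
  next
    case False
    then have r0: "r = 0" using p0 by auto
    show ?thesis
    proof (cases "p > 0")
      case True
      then show ?thesis using g2 by (simp add: zero_le_mult_iff)
    next
      case False
      then have "p = 0" using p0 by auto
      then show ?thesis using g3 r0 by simp
    qed
  qed
  then show ?thesis unfolding c_def p_def r_def .
qed

lemma dens_trace:
  assumes A: "density_mat d A"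
  shows "(\<Sum>v<d. A $$ (v,v)) = 1" "(\<Sum>v<d. Re (A $$ (v,v))) = 1"
proof -
  have "dim_row A = d" using A unfolding density_mat_def psd_mat_def by auto
  then show t: "(\<Sum>v<d. A $$ (v,v)) = 1" using A unfolding density_mat_def mat_trace_def by auto
  have "Re (\<Sum>v<d. A $$ (v,v)) = 1" using t by simp
  then show "(\<Sum>v<d. Re (A $$ (v,v))) = 1" by (simp add: Re_sum)
qed

definition fro :: "nat \<Rightarrow> (nat \<Rightarrow> nat \<Rightarrow> complex) \<Rightarrow> real" where
  "fro d X = (\<Sum>i<d. \<Sum>j<d. (cmod (X i j))^2)"

lemma fro_nonneg: "fro d X \<ge> 0"
  unfolding fro_def by (intro sum_nonneg) auto

lemma dens_fro:
  assumes A: "density_mat d A"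
  shows "fro d (\<lambda>i j. A $$ (i,j)) \<le> 1"
proof -
  have "fro d (\<lambda>i j. A $$ (i,j)) \<le> (\<Sum>i<d. \<Sum>j<d. Re (A $$ (i,i)) * Re (A $$ (j,j)))"
    unfolding fro_def using dens_minor[OF A] by (intro sum_mono) auto
  also have "\<dots> = (\<Sum>i<d. Re (A $$ (i,i))) * (\<Sum>j<d. Re (A $$ (j,j)))"
    by (simp add: sum_product)
  also have "\<dots> = 1" using dens_trace[OF A] by simp
  finally show ?thesis .
qed

section \<open>Cauchy-Schwarz\<close>

lemma cs_real:
  fixes a b :: "'a \<Rightarrow> real"
  shows "(\<Sum>i\<in>I. a i * b i)\<^sup>2 \<le> (\<Sum>i\<in>I. (a i)\<^sup>2) * (\<Sum>i\<in>I. (b i)\<^sup>2)"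
proof (cases "(\<Sum>i\<in>I. (b i)\<^sup>2) > 0")
  case False
  then consider "\<And>i. i\<in>I \<Longrightarrow> b i = 0" | "infinite I"
    by (metis (mono_tags, lifting) sum_pos2 zero_le_power2 zero_less_power2)
  thus ?thesis
    by fastforce
next
  case True
  define r where "r \<equiv> (\<Sum>i\<in>I. a i * b i) / (\<Sum>i\<in>I. (b i)\<^sup>2)"
  have "0 \<le> (\<Sum>i\<in>I. (a i - r * b i)\<^sup>2)"
    by (simp add: sum_nonneg)
  also have "... = (\<Sum>i\<in>I. (a i)\<^sup>2) - 2 * r * (\<Sum>i\<in>I. a i * b i) + r\<^sup>2 * (\<Sum>i\<in>I. (b i)\<^sup>2)"
    by (simp add: algebra_simps power2_eq_square sum_distrib_left flip: sum.distrib)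
  also have "\<dots> = (\<Sum>i\<in>I. (a i)\<^sup>2) - ((\<Sum>i\<in>I. a i * b i))\<^sup>2 / (\<Sum>i\<in>I. (b i)\<^sup>2)"
    by (simp add: r_def power2_eq_square)
  finally have "0 \<le> (\<Sum>i\<in>I. (a i)\<^sup>2) - ((\<Sum>i\<in>I. a i * b i))\<^sup>2 / (\<Sum>i\<in>I. (b i)\<^sup>2)" .
  hence "((\<Sum>i\<in>I. a i * b i))\<^sup>2 / (\<Sum>i\<in>I. (b i)\<^sup>2) \<le> (\<Sum>i\<in>I. (a i)\<^sup>2)"
    by (simp add: le_diff_eq)
  thus "((\<Sum>i\<in>I. a i * b i))\<^sup>2 \<le> (\<Sum>i\<in>I. (a i)\<^sup>2) * (\<Sum>i\<in>I. (b i)\<^sup>2)"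
    by (simp add: pos_divide_le_eq True)
qed

lemma cs_cplx:
  fixes f g :: "'a \<Rightarrow> complex"
  shows "(cmod (\<Sum>i\<in>I. f i * g i))\<^sup>2 \<le> (\<Sum>i\<in>I. (cmod (f i))\<^sup>2) * (\<Sum>i\<in>I. (cmod (g i))\<^sup>2)"
proof -
  have "cmod (\<Sum>i\<in>I. f i * g i) \<le> (\<Sum>i\<in>I. cmod (f i) * cmod (g i))"
    by (metis (no_types, lifting) norm_mult norm_sum sum.cong)
  then have "(cmod (\<Sum>i\<in>I. f i * g i))\<^sup>2 \<le> (\<Sum>i\<in>I. cmod (f i) * cmod (g i))\<^sup>2"
    by (intro power_mono) auto
  also have "\<dots> \<le> (\<Sum>i\<in>I. (cmod (f i))\<^sup>2) * (\<Sum>i\<in>I. (cmod (g i))\<^sup>2)"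
    by (rule cs_real)
  finally show ?thesis .
qed

lemma dsum_cart: "(\<Sum>i<d. \<Sum>j<d. F i j) = (\<Sum>q\<in>{..<d}\<times>{..<d}. F (fst q) (snd q))"
  by (simp add: sum.cartesian_product split_def)

lemma cs2: "(cmod (\<Sum>i<d. \<Sum>j<d. X i j * Y j i))\<^sup>2 \<le> fro d X * fro d Y"
proof -
  have "(cmod (\<Sum>i<d. \<Sum>j<d. X i j * Y j i))\<^sup>2
      = (cmod (\<Sum>q\<in>{..<d}\<times>{..<d}. X (fst q) (snd q) * Y (snd q) (fst q)))\<^sup>2"
    by (simp add: dsum_cart)
  also have "\<dots> \<le> (\<Sum>q\<in>{..<d}\<times>{..<d}. (cmod (X (fst q) (snd q)))\<^sup>2) * (\<Sum>q\<in>{..<d}\<times>{..<d}. (cmod (Y (snd q) (fst q)))\<^sup>2)"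
    by (rule cs_cplx)
  also have "(\<Sum>q\<in>{..<d}\<times>{..<d}. (cmod (X (fst q) (snd q)))\<^sup>2) = fro d X"
    unfolding fro_def by (simp add: dsum_cart)
  also have "(\<Sum>q\<in>{..<d}\<times>{..<d}. (cmod (Y (snd q) (fst q)))\<^sup>2) = fro d Y"
    unfolding fro_def by (subst sum.swap) (simp add: dsum_cart)
  finally show ?thesis .
qed

lemma rowcol: "fro d (\<lambda>j i. \<Sum>l<d. Y j l * W l i) \<le> fro d Y * fro d W"
proof -
  have "fro d (\<lambda>j i. \<Sum>l<d. Y j l * W l i) \<le> (\<Sum>j<d. \<Sum>i<d. (\<Sum>l<d. (cmod (Y j l))\<^sup>2) * (\<Sum>l<d. (cmod (W l i))\<^sup>2))"
    unfolding fro_def by (intro sum_mono cs_cplx)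
  also have "\<dots> = (\<Sum>j<d. \<Sum>l<d. (cmod (Y j l))\<^sup>2) * (\<Sum>i<d. \<Sum>l<d. (cmod (W l i))\<^sup>2)"
    by (simp add: sum_product)
  also have "(\<Sum>i<d. \<Sum>l<d. (cmod (W l i))\<^sup>2) = fro d W"
    unfolding fro_def by (rule sum.swap)
  finally show ?thesis unfolding fro_def by simp
qed

lemma cs3: "(cmod (\<Sum>i<d. \<Sum>j<d. \<Sum>l<d. X i j * Y j l * W l i))\<^sup>2 \<le> fro d X * fro d Y * fro d W"
proof -
  have "(\<Sum>i<d. \<Sum>j<d. \<Sum>l<d. X i j * Y j l * W l i) = (\<Sum>i<d. \<Sum>j<d. X i j * (\<Sum>l<d. Y j l * W l i))"
    by (simp add: sum_distrib_left mult_ac)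
  then have "(cmod (\<Sum>i<d. \<Sum>j<d. \<Sum>l<d. X i j * Y j l * W l i))\<^sup>2 \<le> fro d X * fro d (\<lambda>j i. \<Sum>l<d. Y j l * W l i)"
    using cs2[where d=d and X=X and Y="\<lambda>j i. \<Sum>l<d. Y j l * W l i"] by simp
  also have "\<dots> \<le> fro d X * (fro d Y * fro d W)"
    by (intro mult_left_mono rowcol fro_nonneg)
  finally show ?thesis by (simp add: mult_ac)
qed


section \<open>Operator calculus\<close>

lemma expect_unfold: "expect d n P Y = (\<Sum>x\<in>tuples d n. \<Sum>y\<in>tuples d n. P x y * Y y x)"
  by (simp add: expect_def op_trace_def op_mult_def)

lemma swap_eq_iff: "(y = x \<circ> transpose a b) = (x = y \<circ> transpose a b)"
proof
  assume "y = x \<circ> transpose a b"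
  then show "x = y \<circ> transpose a b" by (simp add: comp_assoc)
next
  assume "x = y \<circ> transpose a b"
  then show "y = x \<circ> transpose a b" by (simp add: comp_assoc)
qed

lemma swap_sym: "swap_op a b y x = swap_op a b x y"
  unfolding swap_op_def using swap_eq_iff by metis

lemma swap_comm: "swap_op a b = swap_op b a"
  unfolding swap_op_def by (simp add: transpose_commute)

lemma collapse:
  assumes "z \<in> tuples d n"
  shows "(\<Sum>y\<in>tuples d n. F y * (if y = z then 1 else 0)) = (F z :: complex)"
proof -
  have "(\<Sum>y\<in>tuples d n. F y * (if y = z then 1 else 0)) = (\<Sum>y\<in>tuples d n. if y = z then F y else 0)"
    by (intro sum.cong) auto
  also have "\<dots> = F z" using assms by (simp add: sum.delta')
  finally show ?thesis .
qed

lemma expect_swap1: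
  assumes "a < n" "b < n"
  shows "(\<Sum>x\<in>tuples d n. \<Sum>y\<in>tuples d n. tensor_prod n al x y * swap_op a b y x) = Qp d n al (transpose a b)"
  unfolding Qp_def
proof (intro sum.cong refl)
  fix x assume x: "x \<in> tuples d n"
  have t: "x \<circ> transpose a b \<in> tuples d n" using tuples_comp[OF x okp_transpose] assms by auto
  show "(\<Sum>y\<in>tuples d n. tensor_prod n al x y * swap_op a b y x) = tensor_prod n al x (x \<circ> transpose a b)"
    unfolding swap_op_def using collapse[OF t] by simp
qed

lemma expect_swap2:
  assumes "a < n" "b < n" "c < n" "e < n"
  shows "(\<Sum>x\<in>tuples d n. \<Sum>y\<in>tuples d n. tensor_prod n al x y * (\<Sum>w\<in>tuples d n. swap_op a b y w * swap_op c e w x))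
     = Qp d n al (transpose c e \<circ> transpose a b)"
  unfolding Qp_def
proof (intro sum.cong refl)
  fix x assume x: "x \<in> tuples d n"
  have t1: "x \<circ> transpose c e \<in> tuples d n" using tuples_comp[OF x okp_transpose] assms by auto
  have t2: "x \<circ> (transpose c e \<circ> transpose a b) \<in> tuples d n"
    using tuples_comp[OF x okp_comp[OF okp_transpose okp_transpose]] assms by auto
  have inner: "(\<Sum>w\<in>tuples d n. swap_op a b y w * swap_op c e w x) = (if y = x \<circ> (transpose c e \<circ> transpose a b) then 1 else 0)" for y
    unfolding swap_op_def using collapse[OF t1, of "\<lambda>w. if y = w \<circ> transpose a b then 1 else 0"]
    by (simp add: comp_assoc)
  show "(\<Sum>y\<in>tuples d n. tensor_prod n al x y * (\<Sum>w\<in>tuples d n. swap_op a b y w * swap_op c e w x))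
      = tensor_prod n al x (x \<circ> (transpose c e \<circ> transpose a b))"
    unfolding inner using collapse[OF t2] by simp
qed

definition cc :: "nat \<Rightarrow> nat \<Rightarrow> nat \<Rightarrow> complex" where
  "cc T a b = (if a = b then 0 else if (a < T) = (b < T) then 1 else -1)"

definition sg :: "nat \<Rightarrow> nat \<Rightarrow> complex" where
  "sg T a = (if a < T then 1 else -1)"

lemma cc_sg: "cc T a b = sg T a * sg T b - (if a = b then 1 else 0)"
  unfolding cc_def sg_def by auto

lemma cc_sym: "cc T a b = cc T b a"
  unfolding cc_def by auto

lemma split2T: fixes T :: nat shows "(\<Sum>a<2*T. f a) = (\<Sum>i<T. f i) + (\<Sum>i<T. f (T+i))"
proof -
  have "{..<2*T} = {0..<T} \<union> {T..<T+T}" by auto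
  then have "(\<Sum>a<2*T. f a) = (\<Sum>a\<in>{0..<T}. f a) + (\<Sum>a\<in>{0+T..<T+T}. f a)"
    by (simp add: sum.union_disjoint)
  also have "(\<Sum>a\<in>{0+T..<T+T}. f a) = (\<Sum>i\<in>{0..<T}. f (i+T))"
    by (rule sum.shift_bounds_nat_ivl)
  finally show ?thesis by (simp add: atLeast0LessThan add.commute)
qed

lemma Zform: "Z_op T y x = (1 / of_nat T ^ 2) * (\<Sum>a<2*T. \<Sum>b<2*T. cc T a b * swap_op a b y x)"
proof -
  have s1: "(\<Sum>a<2*T. \<Sum>b<2*T. F a b) = (\<Sum>i<T. \<Sum>j<T. F i j) + (\<Sum>i<T. \<Sum>j<T. F i (T+j))
       + (\<Sum>i<T. \<Sum>j<T. F (T+i) j) + (\<Sum>i<T. \<Sum>j<T. F (T+i) (T+j))" for F :: "nat \<Rightarrow> nat \<Rightarrow> complex"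
    by (simp add: split2T sum.distrib)
  have s3: "(\<Sum>i<T. \<Sum>j<T. swap_op (T+i) j y x) = (\<Sum>i<T. \<Sum>j<T. swap_op i (T+j) y x)"
    by (subst sum.swap) (simp add: swap_comm)
  have a1: "(\<Sum>i<T. \<Sum>j<T. cc T i j * swap_op i j y x) = (\<Sum>i<T. \<Sum>j<T. if i \<noteq> j then swap_op i j y x else 0)"
    by (intro sum.cong refl) (auto simp: cc_def)
  have a2: "(\<Sum>i<T. \<Sum>j<T. cc T i (T+j) * swap_op i (T+j) y x) = - (\<Sum>i<T. \<Sum>j<T. swap_op i (T+j) y x)"
    by (simp add: cc_def sum_negf)
  have a3: "(\<Sum>i<T. \<Sum>j<T. cc T (T+i) j * swap_op (T+i) j y x) = - (\<Sum>i<T. \<Sum>j<T. swap_op (T+i) j y x)"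
    by (simp add: cc_def sum_negf)
  have a4: "(\<Sum>i<T. \<Sum>j<T. cc T (T+i) (T+j) * swap_op (T+i) (T+j) y x) = (\<Sum>i<T. \<Sum>j<T. if i \<noteq> j then swap_op (T+i) (T+j) y x else 0)"
    by (intro sum.cong refl) (auto simp: cc_def)
  show ?thesis
    unfolding Z_op_def s1[of "\<lambda>a b. cc T a b * swap_op a b y x"] a1 a2 a3 a4 s3
    by (simp add: algebra_simps)
qed

lemma sum4swap:
  "(\<Sum>x\<in>X. \<Sum>y\<in>Y. \<Sum>a\<in>A. \<Sum>b\<in>B. f x y a b) = (\<Sum>a\<in>A. \<Sum>b\<in>B. \<Sum>x\<in>X. \<Sum>y\<in>Y. f x y a b)"
  by (simp only: sum.swap[where A=Y and B=A] sum.swap[where A=Y and B=B]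
      sum.swap[where A=X and B=A] sum.swap[where A=X and B=B])

lemma lin2:
  fixes P :: "'x \<Rightarrow> 'y \<Rightarrow> complex"
  shows "(\<Sum>x\<in>X. \<Sum>y\<in>Y. P x y * (c * (\<Sum>a\<in>A. \<Sum>b\<in>B. K a b * G a b x y))) =
   c * (\<Sum>a\<in>A. \<Sum>b\<in>B. K a b * (\<Sum>x\<in>X. \<Sum>y\<in>Y. P x y * G a b x y))" (is "?L = ?R")
proof -
  have "?L = (\<Sum>x\<in>X. \<Sum>y\<in>Y. \<Sum>a\<in>A. \<Sum>b\<in>B. c * K a b * (P x y * G a b x y))"
    by (simp add: sum_distrib_left mult_ac)
  also have "\<dots> = (\<Sum>a\<in>A. \<Sum>b\<in>B. \<Sum>x\<in>X. \<Sum>y\<in>Y. c * K a b * (P x y * G a b x y))"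
    by (rule sum4swap)
  also have "\<dots> = ?R"
    by (simp add: sum_distrib_left mult_ac)
  finally show ?thesis .
qed

abbreviation PP :: "nat \<Rightarrow> (nat \<times> nat) set" where
  "PP T \<equiv> {..<2*T} \<times> {..<2*T}"

lemma Zform2: "Z_op T y x = (1 / of_nat T ^ 2) * (\<Sum>q\<in>PP T. cc T (fst q) (snd q) * swap_op (fst q) (snd q) y x)"
  unfolding Zform by (simp add: dsum_cart)

lemma EZ_Q:
  "expect d (2*T) (tensor_prod (2*T) al) (Z_op T) =
     (1 / of_nat T ^ 2) * (\<Sum>a<2*T. \<Sum>b<2*T. cc T a b * Qp d (2*T) al (transpose a b))"
proof -
  have "expect d (2*T) (tensor_prod (2*T) al) (Z_op T) =
     (1 / of_nat T ^ 2) * (\<Sum>a<2*T. \<Sum>b<2*T. cc T a b * (\<Sum>x\<in>tuples d (2*T). \<Sum>y\<in>tuples d (2*T). tensor_prod (2*T) al x y * swap_op a b y x))"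
    unfolding expect_unfold Zform by (rule lin2)
  also have "\<dots> = (1 / of_nat T ^ 2) * (\<Sum>a<2*T. \<Sum>b<2*T. cc T a b * Qp d (2*T) al (transpose a b))"
    by (simp add: expect_swap1)
  finally show ?thesis .
qed

lemma ZZform: "op_mult d (2*T) (Z_op T) (Z_op T) y x =
   (1 / of_nat T ^ 2)^2 * (\<Sum>q\<in>PP T. \<Sum>r\<in>PP T. cc T (fst q) (snd q) * cc T (fst r) (snd r) *
      (\<Sum>w\<in>tuples d (2*T). swap_op (fst q) (snd q) y w * swap_op (fst r) (snd r) w x))"
proof -
  have "op_mult d (2*T) (Z_op T) (Z_op T) y x = (\<Sum>w\<in>tuples d (2*T). \<Sum>q\<in>PP T. \<Sum>r\<in>PP T.
     (1 / of_nat T ^ 2)^2 * (cc T (fst q) (snd q) * cc T (fst r) (snd r) * (swap_op (fst q) (snd q) y w * swap_op (fst r) (snd r) w x)))"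
    unfolding op_mult_def Zform2 by (simp add: sum_product sum_distrib_left power2_eq_square mult_ac)
  also have "\<dots> = (\<Sum>q\<in>PP T. \<Sum>r\<in>PP T. \<Sum>w\<in>tuples d (2*T).
     (1 / of_nat T ^ 2)^2 * (cc T (fst q) (snd q) * cc T (fst r) (snd r) * (swap_op (fst q) (snd q) y w * swap_op (fst r) (snd r) w x)))"
    by (simp only: sum.swap[where A="tuples d (2*T)" and B="PP T"])
  also have "\<dots> = (1 / of_nat T ^ 2)^2 * (\<Sum>q\<in>PP T. \<Sum>r\<in>PP T. cc T (fst q) (snd q) * cc T (fst r) (snd r) *
      (\<Sum>w\<in>tuples d (2*T). swap_op (fst q) (snd q) y w * swap_op (fst r) (snd r) w x))"
    by (simp add: sum_distrib_left)
  finally show ?thesis .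
qed

lemma EZZ_Q:
  "expect d (2*T) (tensor_prod (2*T) al) (op_mult d (2*T) (Z_op T) (Z_op T)) =
     (1 / of_nat T ^ 2)^2 * (\<Sum>q\<in>PP T. \<Sum>r\<in>PP T. cc T (fst q) (snd q) * cc T (fst r) (snd r) *
        Qp d (2*T) al (transpose (fst r) (snd r) \<circ> transpose (fst q) (snd q)))"
proof -
  have "expect d (2*T) (tensor_prod (2*T) al) (op_mult d (2*T) (Z_op T) (Z_op T)) =
     (1 / of_nat T ^ 2)^2 * (\<Sum>q\<in>PP T. \<Sum>r\<in>PP T. cc T (fst q) (snd q) * cc T (fst r) (snd r) *
        (\<Sum>x\<in>tuples d (2*T). \<Sum>y\<in>tuples d (2*T). tensor_prod (2*T) al x y *
          (\<Sum>w\<in>tuples d (2*T). swap_op (fst q) (snd q) y w * swap_op (fst r) (snd r) w x)))"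
    unfolding expect_unfold ZZform by (rule lin2)
  also have "\<dots> = (1 / of_nat T ^ 2)^2 * (\<Sum>q\<in>PP T. \<Sum>r\<in>PP T. cc T (fst q) (snd q) * cc T (fst r) (snd r) *
        Qp d (2*T) al (transpose (fst r) (snd r) \<circ> transpose (fst q) (snd q)))"
    by (intro arg_cong2[where f="(*)"] refl sum.cong) (auto simp: expect_swap2)
  finally show ?thesis .
qed


lemma g2_sym: "g2 d X Y = g2 d Y X"
  unfolding g2_def by (subst sum.swap) (simp add: mult.commute)

lemma c3_cyc: "c3 d X Y W = c3 d Y W X"
proof -
  have "c3 d X Y W = (\<Sum>j<d. \<Sum>i<d. \<Sum>l<d. X $$ (i,j) * Y $$ (j,l) * W $$ (l,i))"
    unfolding c3_def by (rule sum.swap)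
  also have "\<dots> = (\<Sum>j<d. \<Sum>l<d. \<Sum>i<d. X $$ (i,j) * Y $$ (j,l) * W $$ (l,i))"
    by (rule sum.cong[OF refl], rule sum.swap)
  also have "\<dots> = c3 d Y W X"
    unfolding c3_def by (simp add: mult_ac)
  finally show ?thesis .
qed

lemma sum_rem2:
  assumes "finite S" "a \<in> S" "b \<in> S" "a \<noteq> b"
  shows "(\<Sum>c\<in>S. F c) = F a + F b + (\<Sum>c\<in>S - {a,b}. F c)"
proof -
  have "(\<Sum>c\<in>S. F c) = F a + (\<Sum>c\<in>S - {a}. F c)"
    using assms by (simp add: sum.remove)
  also have "(\<Sum>c\<in>S - {a}. F c) = F b + (\<Sum>c\<in>S - {a} - {b}. F c)"
    using assms by (simp add: sum.remove)
  also have "S - {a} - {b} = S - {a,b}" by auto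
  finally show ?thesis by (simp add: add.assoc)
qed

locale zc =
  fixes d T :: nat and \<rho> \<sigma> :: "nat \<Rightarrow> complex mat"
  assumes T1: "1 \<le> T" and dens: "\<forall>t<T. density_mat d (\<rho> t) \<and> density_mat d (\<sigma> t)"
begin

definition al :: "nat \<Rightarrow> complex mat" where
  "al k = (if k < T then \<rho> k else \<sigma> (k - T))"

lemma al_dens: "k < 2*T \<Longrightarrow> density_mat d (al k)"
  unfolding al_def using dens by (cases "k < T") auto

lemma trs: "\<forall>k<2*T. (\<Sum>v<d. al k $$ (v,v)) = 1"
  using al_dens dens_trace by blast

lemma joint: "joint_state T \<rho> \<sigma> = tensor_prod (2*T) al"
proof -
  have "(\<lambda>k. if k < T then \<rho> k else \<sigma> (k - T)) = al" by (rule ext) (simp add: al_def)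
  then show ?thesis unfolding joint_state_def by simp
qed

definition g :: "nat \<Rightarrow> nat \<Rightarrow> complex" where "g a b = g2 d (al a) (al b)"
definition C :: "nat \<Rightarrow> nat \<Rightarrow> nat \<Rightarrow> complex" where "C a b e = c3 d (al a) (al b) (al e)"
definition Nm :: "nat \<Rightarrow> nat \<Rightarrow> complex" where "Nm i j = (\<Sum>b<2*T. sg T b * al b $$ (i,j))"

lemma g_sym: "g a b = g b a" unfolding g_def by (rule g2_sym)

lemma Qtr: "a < 2*T \<Longrightarrow> b < 2*T \<Longrightarrow> a \<noteq> b \<Longrightarrow> Qp d (2*T) al (transpose a b) = g a b"
  using Q_tr[OF trs, where a=a and b=b and p="transpose a b"] by (simp add: g_def)


lemma EZ: "expect d (2*T) (joint_state T \<rho> \<sigma>) (Z_op T) = (1 / of_nat T ^ 2) * (\<Sum>a<2*T. \<Sum>b<2*T. cc T a b * g a b)"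
proof -
  have "cc T a b * Qp d (2*T) al (transpose a b) = cc T a b * g a b" if "a < 2*T" "b < 2*T" for a b
    using that by (cases "a = b") (auto simp: Qtr cc_def)
  then have "(\<Sum>a<2*T. \<Sum>b<2*T. cc T a b * Qp d (2*T) al (transpose a b)) = (\<Sum>a<2*T. \<Sum>b<2*T. cc T a b * g a b)"
    by (intro sum.cong refl) auto
  then show ?thesis unfolding joint EZ_Q by simp
qed


lemma fro_al: "a < 2*T \<Longrightarrow> fro d (\<lambda>i j. al a $$ (i,j)) \<le> 1"
  using al_dens dens_fro by blast

lemma herm_al: "a < 2*T \<Longrightarrow> i < d \<Longrightarrow> j < d \<Longrightarrow> al a $$ (j,i) = cnj (al a $$ (i,j))"
  using al_dens dens_herm by blast

lemma herm_al': "a < 2*T \<Longrightarrow> i < d \<Longrightarrow> j < d \<Longrightarrow> cnj (al a $$ (i,j)) = al a $$ (j,i)"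
  using herm_al by (metis complex_cnj_cnj)

lemma g_aa: "a < 2*T \<Longrightarrow> g a a = of_real (fro d (\<lambda>i j. al a $$ (i,j)))"
proof -
  assume a: "a < 2*T"
  have "of_real (fro d (\<lambda>i j. al a $$ (i,j))) = (\<Sum>i<d. \<Sum>j<d. of_real ((cmod (al a $$ (i,j)))^2) :: complex)"
    unfolding fro_def by (simp only: of_real_sum)
  also have "\<dots> = (\<Sum>i<d. \<Sum>j<d. al a $$ (i,j) * cnj (al a $$ (i,j)))"
    by (simp only: complex_norm_square)
  also have "\<dots> = g a a"
    unfolding g_def g2_def by (intro sum.cong refl) (simp add: herm_al' a)
  finally show ?thesis by simp
qed

lemma g_real: "a < 2*T \<Longrightarrow> b < 2*T \<Longrightarrow> cnj (g a b) = g a b"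
proof -
  assume a: "a < 2*T" and b: "b < 2*T"
  have "cnj (g a b) = (\<Sum>i<d. \<Sum>j<d. al a $$ (j,i) * al b $$ (i,j))"
    unfolding g_def g2_def by (simp add: herm_al' a b)
  also have "\<dots> = g a b"
    unfolding g_def g2_def by (subst sum.swap) simp
  finally show ?thesis .
qed

lemma g_bound: "a < 2*T \<Longrightarrow> b < 2*T \<Longrightarrow> cmod (g a b) \<le> 1"
proof -
  assume a: "a < 2*T" and b: "b < 2*T"
  have "(cmod (g a b))^2 \<le> fro d (\<lambda>i j. al a $$ (i,j)) * fro d (\<lambda>i j. al b $$ (i,j))"
    unfolding g_def g2_def by (rule cs2)
  also have "\<dots> \<le> 1 * 1"
    using fro_al[OF a] fro_al[OF b] fro_nonneg by (intro mult_mono) auto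
  finally have "(cmod (g a b))^2 \<le> 1^2" by simp
  then show ?thesis by (rule power2_le_imp_le) simp
qed

lemma C_bound: "a < 2*T \<Longrightarrow> b < 2*T \<Longrightarrow> e < 2*T \<Longrightarrow> cmod (C a b e) \<le> 1"
proof -
  assume a: "a < 2*T" and b: "b < 2*T" and e: "e < 2*T"
  have "(cmod (C a b e))^2 \<le> fro d (\<lambda>i j. al a $$ (i,j)) * fro d (\<lambda>i j. al b $$ (i,j)) * fro d (\<lambda>i j. al e $$ (i,j))"
    unfolding C_def c3_def by (rule cs3)
  also have "\<dots> \<le> 1 * 1 * 1"
    using fro_al[OF a] fro_al[OF b] fro_al[OF e] fro_nonneg by (intro mult_mono) auto
  finally have "(cmod (C a b e))^2 \<le> 1^2" by simp
  then show ?thesis by (rule power2_le_imp_le) simp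
qed

lemma cc_bound: "cmod (cc T a b) \<le> 1"
  unfolding cc_def by auto

lemma Nm_herm': "i < d \<Longrightarrow> j < d \<Longrightarrow> cnj (Nm i j) = Nm j i"
  unfolding Nm_def by (auto simp: sg_def herm_al' intro!: sum.cong)

lemma D_entry:
  assumes "i < d" "j < d"
  shows "(avg_state d T \<rho> - avg_state d T \<sigma>) $$ (i,j) = Nm i j / of_nat T"
proof -
  have "Nm i j = (\<Sum>t<T. \<rho> t $$ (i,j)) - (\<Sum>t<T. \<sigma> t $$ (i,j))"
    unfolding Nm_def split2T by (simp add: sg_def al_def sum_negf)
  then show ?thesis using assms
    by (simp add: avg_state_def diff_divide_distrib)
qed

lemma mu_Nm: "mu_val d T \<rho> \<sigma> = (\<Sum>i<d. \<Sum>j<d. Nm i j * Nm j i) / of_nat T ^ 2"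
proof -
  define D where "D = avg_state d T \<rho> - avg_state d T \<sigma>"
  have Dc: "D \<in> carrier_mat d d" unfolding D_def avg_state_def by auto
  have "mu_val d T \<rho> \<sigma> = (\<Sum>i<d. (D * D) $$ (i,i))"
    unfolding mu_val_def Let_def D_def[symmetric] mat_trace_def using Dc by simp
  also have "\<dots> = (\<Sum>i<d. \<Sum>j<d. D $$ (i,j) * D $$ (j,i))"
    using Dc by (intro sum.cong refl) (auto simp: scalar_prod_def atLeast0LessThan)
  also have "\<dots> = (\<Sum>i<d. \<Sum>j<d. (Nm i j / of_nat T) * (Nm j i / of_nat T))"
    unfolding D_def by (intro sum.cong refl) (simp add: D_entry)
  also have "\<dots> = (\<Sum>i<d. \<Sum>j<d. Nm i j * Nm j i) / of_nat T ^ 2"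
    by (simp add: sum_divide_distrib power2_eq_square)
  finally show ?thesis .
qed

lemma fro_Nm: "(\<Sum>i<d. \<Sum>j<d. Nm i j * Nm j i) = of_real (fro d Nm)"
proof -
  have "of_real (fro d Nm) = (\<Sum>i<d. \<Sum>j<d. of_real ((cmod (Nm i j))^2) :: complex)"
    unfolding fro_def by (simp only: of_real_sum)
  also have "\<dots> = (\<Sum>i<d. \<Sum>j<d. Nm i j * cnj (Nm i j))"
    by (simp only: complex_norm_square)
  also have "\<dots> = (\<Sum>i<d. \<Sum>j<d. Nm i j * Nm j i)"
    by (intro sum.cong refl) (simp add: Nm_herm')
  finally show ?thesis by simp
qed

lemma mu_real: "mu_val d T \<rho> \<sigma> = of_real (fro d Nm / real T ^ 2)"
  unfolding mu_Nm fro_Nm by simp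

lemma Nm_g: "(\<Sum>i<d. \<Sum>j<d. Nm i j * Nm j i) = (\<Sum>a<2*T. \<Sum>b<2*T. sg T a * sg T b * g a b)"
proof -
  have "(\<Sum>i<d. \<Sum>j<d. Nm i j * Nm j i) = (\<Sum>i<d. \<Sum>j<d. \<Sum>a<2*T. \<Sum>b<2*T. sg T a * sg T b * (al a $$ (i,j) * al b $$ (j,i)))"
    unfolding Nm_def by (simp add: sum_product mult_ac)
  also have "\<dots> = (\<Sum>a<2*T. \<Sum>b<2*T. \<Sum>i<d. \<Sum>j<d. sg T a * sg T b * (al a $$ (i,j) * al b $$ (j,i)))"
    by (rule sum4swap)
  also have "\<dots> = (\<Sum>a<2*T. \<Sum>b<2*T. sg T a * sg T b * g a b)"
    unfolding g_def g2_def by (simp add: sum_distrib_left)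
  finally show ?thesis .
qed

lemma part1: "cmod (expect d (2*T) (joint_state T \<rho> \<sigma>) (Z_op T) - mu_val d T \<rho> \<sigma>) \<le> 2 / real T"
proof -
  have Tpos: "real T > 0" using T1 by simp
  have "(\<Sum>a<2*T. \<Sum>b<2*T. cc T a b * g a b) = (\<Sum>a<2*T. \<Sum>b<2*T. sg T a * sg T b * g a b) - (\<Sum>a<2*T. g a a)"
  proof -
    have pw: "cc T a b * g a b = sg T a * sg T b * g a b - (if a = b then g a b else 0)" for a b
      by (simp add: cc_sg algebra_simps)
    have dl: "(\<Sum>b<2*T. if a = b then g a b else 0) = g a a" if "a < 2*T" for a
      using that by (simp add: sum.delta)
    have "(\<Sum>a<2*T. \<Sum>b<2*T. cc T a b * g a b) = (\<Sum>a<2*T. \<Sum>b<2*T. sg T a * sg T b * g a b) - (\<Sum>a<2*T. \<Sum>b<2*T. if a = b then g a b else 0)"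
      by (simp only: pw sum_subtractf)
    also have "(\<Sum>a<2*T. \<Sum>b<2*T. if a = b then g a b else 0) = (\<Sum>a<2*T. g a a)"
      using dl by (intro sum.cong refl) auto
    finally show ?thesis .
  qed
  then have "expect d (2*T) (joint_state T \<rho> \<sigma>) (Z_op T) - mu_val d T \<rho> \<sigma> = - (\<Sum>a<2*T. g a a) / of_nat T ^ 2"
    unfolding EZ mu_Nm Nm_g by (simp add: diff_divide_distrib)
  also have "(\<Sum>a<2*T. g a a) = of_real (\<Sum>a<2*T. fro d (\<lambda>i j. al a $$ (i,j)))"
    by (simp add: g_aa of_real_sum)
  finally have eq0: "expect d (2*T) (joint_state T \<rho> \<sigma>) (Z_op T) - mu_val d T \<rho> \<sigma> = - of_real (\<Sum>a<2*T. fro d (\<lambda>i j. al a $$ (i,j))) / of_nat T ^ 2" .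
  define S where "S = (\<Sum>a<2*T. fro d (\<lambda>i j. al a $$ (i,j)))"
  have eq: "cmod (expect d (2*T) (joint_state T \<rho> \<sigma>) (Z_op T) - mu_val d T \<rho> \<sigma>) = abs S / real T ^ 2"
    unfolding eq0 S_def[symmetric] by (simp add: norm_divide norm_power)
  have S1: "S \<le> (\<Sum>a<2*T. (1::real))"
    unfolding S_def using fro_al by (intro sum_mono) auto
  have S0: "S \<ge> 0" unfolding S_def using fro_nonneg by (intro sum_nonneg) auto
  have "abs S \<le> (\<Sum>a<2*T. (1::real))" using S0 S1 by simp
  also have "\<dots> = 2 * real T" by simp
  finally have "abs S / real T ^ 2 \<le> 2 * real T / real T ^ 2"
    using Tpos by (intro divide_right_mono) auto
  also have "\<dots> = 2 / real T" using Tpos by (simp add: power2_eq_square)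
  finally show ?thesis using eq by simp
qed


end

lemma dsum_bound:
  fixes f :: "nat \<Rightarrow> nat \<Rightarrow> complex"
  assumes "\<forall>a<m. \<forall>b<m. cmod (f a b) \<le> B"
  shows "cmod (\<Sum>a<m. \<Sum>b<m. f a b) \<le> real m * real m * B"
proof -
  have "cmod (\<Sum>a<m. \<Sum>b<m. f a b) \<le> (\<Sum>a<m. cmod (\<Sum>b<m. f a b))" by (rule norm_sum)
  also have "\<dots> \<le> (\<Sum>a<m. \<Sum>b<m. cmod (f a b))" by (intro sum_mono norm_sum)
  also have "\<dots> \<le> (\<Sum>a<m. \<Sum>b<m. B)" using assms by (intro sum_mono) auto
  also have "\<dots> = real m * real m * B" by simp
  finally show ?thesis .
qed

lemma expect_herm:
  assumes P: "\<forall>x\<in>tuples d n. \<forall>y\<in>tuples d n. cnj (P x y) = P y x"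
    and Y: "\<forall>x\<in>tuples d n. \<forall>y\<in>tuples d n. cnj (Y x y) = Y y x"
  shows "cnj (expect d n P Y) = expect d n P Y"
proof -
  have "cnj (expect d n P Y) = (\<Sum>x\<in>tuples d n. \<Sum>y\<in>tuples d n. P y x * Y x y)"
    unfolding expect_unfold using P Y by (simp add: cnj_sum)
  also have "\<dots> = expect d n P Y"
    unfolding expect_unfold by (rule sum.swap)
  finally show ?thesis .
qed

lemma cnj_cc[simp]: "cnj (cc T a b) = cc T a b" unfolding cc_def by simp
lemma cnj_swap[simp]: "cnj (swap_op a b x y) = swap_op a b x y" unfolding swap_op_def by simp

lemma Z_herm: "cnj (Z_op T x y) = Z_op T y x"
  unfolding Zform by (simp add: swap_sym)

lemma ZZ_herm: "cnj (op_mult d n (Z_op T) (Z_op T) x y) = op_mult d n (Z_op T) (Z_op T) y x"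
  unfolding op_mult_def by (simp add: Z_herm mult.commute)

context zc
begin

lemma P_herm: "\<forall>x\<in>tuples d (2*T). \<forall>y\<in>tuples d (2*T). cnj (joint_state T \<rho> \<sigma> x y) = joint_state T \<rho> \<sigma> y x"
  unfolding joint tensor_prod_def by (auto intro!: prod.cong simp: herm_al' tuples_lt)

lemma EZ_real: "Im (expect d (2*T) (joint_state T \<rho> \<sigma>) (Z_op T)) = 0"
  using expect_herm[OF P_herm, of "Z_op T"] Z_herm by (metis Reals_cnj_iff complex_is_Real_iff)

lemma EZZ_real: "Im (expect d (2*T) (joint_state T \<rho> \<sigma>) (op_mult d (2*T) (Z_op T) (Z_op T))) = 0"
  using expect_herm[OF P_herm, of "op_mult d (2*T) (Z_op T) (Z_op T)"] ZZ_herm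
  by (metis Reals_cnj_iff complex_is_Real_iff)

lemma Var_real: "Im (variance_op d (2*T) (joint_state T \<rho> \<sigma>) (Z_op T)) = 0"
  unfolding variance_op_def using EZ_real EZZ_real by (simp add: power2_eq_square)

end

context zc
begin

definition W :: "nat \<Rightarrow> nat \<Rightarrow> nat \<Rightarrow> nat \<Rightarrow> complex" where
  "W a b c e = Qp d (2*T) al (transpose c e \<circ> transpose a b)"
definition X :: "nat \<Rightarrow> nat \<Rightarrow> nat \<Rightarrow> nat \<Rightarrow> complex" where
  "X a b c e = cc T c e * (W a b c e - g a b * g c e)"
definition R :: "nat \<Rightarrow> nat \<Rightarrow> nat set" where
  "R a b = {..<2*T} - {a,b}"
definition Y1 :: "nat \<Rightarrow> nat \<Rightarrow> complex" where
  "Y1 a b = (\<Sum>e\<in>R a b. cc T a e * (C a b e - g a b * g a e))"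
definition Y2 :: "nat \<Rightarrow> nat \<Rightarrow> complex" where
  "Y2 a b = (\<Sum>e\<in>R a b. cc T b e * (C a e b - g a b * g b e))"
definition Y3 :: "nat \<Rightarrow> nat \<Rightarrow> complex" where
  "Y3 a b = (\<Sum>c\<in>R a b. cc T c a * (C a b c - g a b * g c a))"
definition Y4 :: "nat \<Rightarrow> nat \<Rightarrow> complex" where
  "Y4 a b = (\<Sum>c\<in>R a b. cc T c b * (C a c b - g a b * g c b))"

lemma W_id1: "W a b a b = 1"
  unfolding W_def using Q_id[OF trs] by simp

lemma W_id2: "W a b b a = 1"
  unfolding W_def using Q_id[OF trs] by (simp add: transpose_commute)

lemma W_3a: "a < 2*T \<Longrightarrow> b < 2*T \<Longrightarrow> e < 2*T \<Longrightarrow> a \<noteq> b \<Longrightarrow> a \<noteq> e \<Longrightarrow> b \<noteq> e \<Longrightarrow> W a b a e = C a b e"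
  unfolding W_def C_def by (rule Q_3[OF trs]) (auto simp: transpose_def)

lemma W_3b: "a < 2*T \<Longrightarrow> b < 2*T \<Longrightarrow> e < 2*T \<Longrightarrow> a \<noteq> b \<Longrightarrow> a \<noteq> e \<Longrightarrow> b \<noteq> e \<Longrightarrow> W a b b e = C a e b"
  unfolding W_def C_def by (rule Q_3[OF trs]) (auto simp: transpose_def)

lemma W_3c: "a < 2*T \<Longrightarrow> b < 2*T \<Longrightarrow> c < 2*T \<Longrightarrow> a \<noteq> b \<Longrightarrow> a \<noteq> c \<Longrightarrow> b \<noteq> c \<Longrightarrow> W a b c a = C a b c"
  unfolding W_def C_def by (rule Q_3[OF trs]) (auto simp: transpose_def)

lemma W_3d: "a < 2*T \<Longrightarrow> b < 2*T \<Longrightarrow> c < 2*T \<Longrightarrow> a \<noteq> b \<Longrightarrow> a \<noteq> c \<Longrightarrow> b \<noteq> c \<Longrightarrow> W a b c b = C a c b"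
  unfolding W_def C_def by (rule Q_3[OF trs]) (auto simp: transpose_def)

lemma W_22: "a < 2*T \<Longrightarrow> b < 2*T \<Longrightarrow> c < 2*T \<Longrightarrow> e < 2*T \<Longrightarrow> a \<noteq> b \<Longrightarrow> a \<noteq> c \<Longrightarrow> a \<noteq> e \<Longrightarrow> b \<noteq> c \<Longrightarrow> b \<noteq> e \<Longrightarrow> c \<noteq> e
   \<Longrightarrow> W a b c e = g a b * g c e"
  unfolding W_def g_def by (rule Q_22[OF trs]) (auto simp: transpose_def)

lemma inner:
  assumes a: "a < 2*T" and b: "b < 2*T" and ab: "a \<noteq> b"
  shows "(\<Sum>c<2*T. \<Sum>e<2*T. X a b c e) = 2 * cc T a b * (1 - (g a b)^2) + Y1 a b + Y2 a b + Y3 a b + Y4 a b"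
proof -
  have fin: "finite {..<2*T}" by simp
  have ain: "a \<in> {..<2*T}" and bin: "b \<in> {..<2*T}" using a b by auto
  have Rm: "e \<in> R a b \<longleftrightarrow> e < 2*T \<and> e \<noteq> a \<and> e \<noteq> b" for e unfolding R_def by auto
  have Fa: "(\<Sum>e<2*T. X a b a e) = cc T a b * (1 - (g a b)^2) + Y1 a b"
  proof -
    have "(\<Sum>e<2*T. X a b a e) = X a b a a + X a b a b + (\<Sum>e\<in>R a b. X a b a e)"
      unfolding R_def by (rule sum_rem2[OF fin ain bin ab])
    also have "X a b a a = 0" by (simp add: X_def cc_def)
    also have "X a b a b = cc T a b * (1 - (g a b)^2)" by (simp add: X_def W_id1 power2_eq_square)
    also have "(\<Sum>e\<in>R a b. X a b a e) = Y1 a b"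
      unfolding Y1_def X_def using a b ab by (intro sum.cong refl) (auto simp: Rm W_3a)
    finally show ?thesis by simp
  qed
  have Fb: "(\<Sum>e<2*T. X a b b e) = cc T a b * (1 - (g a b)^2) + Y2 a b"
  proof -
    have "(\<Sum>e<2*T. X a b b e) = X a b b a + X a b b b + (\<Sum>e\<in>R a b. X a b b e)"
      unfolding R_def by (rule sum_rem2[OF fin ain bin ab])
    also have "X a b b b = 0" by (simp add: X_def cc_def)
    also have "X a b b a = cc T a b * (1 - (g a b)^2)"
      by (simp add: X_def W_id2 power2_eq_square cc_sym[of T b a] g_sym[of b a])
    also have "(\<Sum>e\<in>R a b. X a b b e) = Y2 a b"
      unfolding Y2_def X_def using a b ab by (intro sum.cong refl) (auto simp: Rm W_3b)
    finally show ?thesis by simp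
  qed
  have Fc: "(\<Sum>e<2*T. X a b c e) = cc T c a * (C a b c - g a b * g c a) + cc T c b * (C a c b - g a b * g c b)"
    if c: "c \<in> R a b" for c
  proof -
    have c2: "c < 2*T" "c \<noteq> a" "c \<noteq> b" using c Rm by auto
    have "(\<Sum>e<2*T. X a b c e) = X a b c a + X a b c b + (\<Sum>e\<in>R a b. X a b c e)"
      unfolding R_def by (rule sum_rem2[OF fin ain bin ab])
    also have "(\<Sum>e\<in>R a b. X a b c e) = 0"
    proof (intro sum.neutral ballI)
      fix e assume e: "e \<in> R a b"
      show "X a b c e = 0"
      proof (cases "e = c")
        case True then show ?thesis by (simp add: X_def cc_def)
      next
        case False then show ?thesis using e c2 a b ab by (simp add: X_def Rm W_22)
      qed
    qed
    also have "X a b c a = cc T c a * (C a b c - g a b * g c a)"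
      using c2 a b ab by (simp add: X_def W_3c)
    also have "X a b c b = cc T c b * (C a c b - g a b * g c b)"
      using c2 a b ab by (simp add: X_def W_3d)
    finally show ?thesis by simp
  qed
  have "(\<Sum>c<2*T. \<Sum>e<2*T. X a b c e) = (\<Sum>e<2*T. X a b a e) + (\<Sum>e<2*T. X a b b e) + (\<Sum>c\<in>R a b. \<Sum>e<2*T. X a b c e)"
    unfolding R_def by (rule sum_rem2[OF fin ain bin ab])
  also have "(\<Sum>c\<in>R a b. \<Sum>e<2*T. X a b c e) = Y3 a b + Y4 a b"
    unfolding Y3_def Y4_def by (simp add: Fc sum.distrib)
  finally show ?thesis using Fa Fb by simp
qed

definition V4 :: complex where
  "V4 = (\<Sum>a<2*T. \<Sum>b<2*T. cc T a b * (\<Sum>c<2*T. \<Sum>e<2*T. X a b c e))"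

lemma EZZ: "expect d (2*T) (joint_state T \<rho> \<sigma>) (op_mult d (2*T) (Z_op T) (Z_op T)) =
  (1 / of_nat T ^ 2)^2 * (\<Sum>a<2*T. \<Sum>b<2*T. \<Sum>c<2*T. \<Sum>e<2*T. cc T a b * cc T c e * W a b c e)"
  unfolding joint EZZ_Q W_def by (simp add: dsum_cart)

lemma Var_V4: "variance_op d (2*T) (joint_state T \<rho> \<sigma>) (Z_op T) = (1 / of_nat T ^ 2)^2 * V4"
proof -
  have sq: "(\<Sum>a<2*T. \<Sum>b<2*T. cc T a b * g a b)^2 = (\<Sum>a<2*T. \<Sum>b<2*T. \<Sum>c<2*T. \<Sum>e<2*T. (cc T a b * g a b) * (cc T c e * g c e))"
    apply (simp only: power2_eq_square sum_distrib_right)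
    apply (simp only: sum_distrib_left)
    done
  have diff: "(\<Sum>a<2*T. \<Sum>b<2*T. \<Sum>c<2*T. \<Sum>e<2*T. cc T a b * cc T c e * W a b c e)
      - (\<Sum>a<2*T. \<Sum>b<2*T. \<Sum>c<2*T. \<Sum>e<2*T. (cc T a b * g a b) * (cc T c e * g c e)) = V4"
    unfolding V4_def
    apply (simp only: sum_subtractf[symmetric] sum_distrib_left)
    apply (intro sum.cong refl)
    apply (simp add: X_def algebra_simps)
    done
  show ?thesis
    unfolding variance_op_def EZZ EZ power_mult_distrib sq diff[symmetric]
    by (simp add: algebra_simps)
qed

end

context zc
begin

definition S0 :: complex where
  "S0 = (\<Sum>a<2*T. \<Sum>b<2*T. cc T a b * (2 * cc T a b * (1 - (g a b)^2)))"
definition Mn :: "nat \<Rightarrow> complex" where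
  "Mn a = (\<Sum>b<2*T. \<Sum>e<2*T. cc T a b * cc T a e * C a b e)"
definition L :: "nat \<Rightarrow> complex" where
  "L a = (\<Sum>b<2*T. cc T a b * g a b)"
definition E1 :: complex where
  "E1 = (\<Sum>a<2*T. \<Sum>b<2*T. cc T a b * cc T a b * (C a b b - g a b * g a b))"

lemma R_sym: "R a b = R b a" unfolding R_def by auto

lemma C_cyc: "C a b e = C b e a" unfolding C_def by (rule c3_cyc)

lemma V4_split: "V4 = S0 + 4 * (\<Sum>a<2*T. \<Sum>b<2*T. cc T a b * Y1 a b)"
proof -
  have s1: "V4 = (\<Sum>a<2*T. \<Sum>b<2*T. cc T a b * (2 * cc T a b * (1 - (g a b)^2) + Y1 a b + Y2 a b + Y3 a b + Y4 a b))"
    unfolding V4_def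
  proof (intro sum.cong refl)
    fix a b assume "a \<in> {..<2*T}" "b \<in> {..<2*T}"
    then show "cc T a b * (\<Sum>c<2*T. \<Sum>e<2*T. X a b c e) = cc T a b * (2 * cc T a b * (1 - (g a b)^2) + Y1 a b + Y2 a b + Y3 a b + Y4 a b)"
      by (cases "a = b") (auto simp: inner cc_def)
  qed
  have y3: "Y3 a b = Y1 a b" for a b
    unfolding Y1_def Y3_def by (intro sum.cong refl) (simp add: cc_sym[of T a] g_sym[of _ a])
  have y4: "Y4 a b = Y2 a b" for a b
    unfolding Y2_def Y4_def by (intro sum.cong refl) (simp add: cc_sym[of T b] g_sym[of _ b])
  have y2: "(\<Sum>a<2*T. \<Sum>b<2*T. cc T a b * Y2 a b) = (\<Sum>a<2*T. \<Sum>b<2*T. cc T a b * Y1 a b)"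
  proof -
    have "(\<Sum>a<2*T. \<Sum>b<2*T. cc T a b * Y2 a b) = (\<Sum>b<2*T. \<Sum>a<2*T. cc T a b * Y2 a b)"
      by (rule sum.swap)
    also have "\<dots> = (\<Sum>b<2*T. \<Sum>a<2*T. cc T b a * Y1 b a)"
    proof (intro sum.cong refl)
      fix a b
      have cyc2: "C x y z = C z x y" for x y z by (metis C_cyc)
      have "Y2 a b = Y1 b a"
        unfolding Y1_def Y2_def R_sym[of a b]
        by (intro sum.cong refl) (simp add: cyc2[of a] g_sym[of a b])
      then show "cc T a b * Y2 a b = cc T b a * Y1 b a" by (simp add: cc_sym)
    qed
    finally show ?thesis .
  qed
  have e: "(\<Sum>a<2*T. \<Sum>b<2*T. cc T a b * (2 * cc T a b * (1 - (g a b)^2) + Y1 a b + Y2 a b + Y1 a b + Y2 a b))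
     = (\<Sum>a<2*T. \<Sum>b<2*T. cc T a b * (2 * cc T a b * (1 - (g a b)^2))) + 2 * (\<Sum>a<2*T. \<Sum>b<2*T. cc T a b * Y1 a b)
       + 2 * (\<Sum>a<2*T. \<Sum>b<2*T. cc T a b * Y2 a b)"
  proof -
    have pw: "cc T a b * (2 * cc T a b * (1 - (g a b)^2) + Y1 a b + Y2 a b + Y1 a b + Y2 a b)
      = cc T a b * (2 * cc T a b * (1 - (g a b)^2)) + 2 * (cc T a b * Y1 a b) + 2 * (cc T a b * Y2 a b)" for a b
      by (simp add: algebra_simps)
    show ?thesis by (simp only: pw sum.distrib sum_distrib_left)
  qed
  show ?thesis
    unfolding s1 S0_def y3 y4 e y2 by simp
qed

lemma P1_split: "(\<Sum>a<2*T. \<Sum>b<2*T. cc T a b * Y1 a b) = (\<Sum>a<2*T. Mn a - L a * L a) - E1"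
proof -
  have pw: "cc T a b * Y1 a b = cc T a b * (\<Sum>e<2*T. cc T a e * (C a b e - g a b * g a e)) - cc T a b * cc T a b * (C a b b - g a b * g a b)"
    if a: "a < 2*T" and b: "b < 2*T" for a b
  proof (cases "a = b")
    case True then show ?thesis by (simp add: cc_def)
  next
    case False
    define S where "S = (\<Sum>e<2*T. cc T a e * (C a b e - g a b * g a e))"
    have "S = cc T a a * (C a b a - g a b * g a a) + cc T a b * (C a b b - g a b * g a b) + Y1 a b"
      unfolding S_def Y1_def R_def by (rule sum_rem2) (use a b False in auto)
    moreover have "cc T a a = 0" by (simp add: cc_def)
    ultimately have "Y1 a b = S - cc T a b * (C a b b - g a b * g a b)" by simp
    then show ?thesis unfolding S_def[symmetric] by (simp add: right_diff_distrib mult.assoc)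
  qed
  have inn: "(\<Sum>b<2*T. cc T a b * (\<Sum>e<2*T. cc T a e * (C a b e - g a b * g a e))) = Mn a - L a * L a" for a
    unfolding Mn_def L_def
    by (simp add: sum_distrib_left sum_product right_diff_distrib sum_subtractf mult_ac)
  have "(\<Sum>a<2*T. \<Sum>b<2*T. cc T a b * Y1 a b) = (\<Sum>a<2*T. \<Sum>b<2*T. cc T a b * (\<Sum>e<2*T. cc T a e * (C a b e - g a b * g a e)) - cc T a b * cc T a b * (C a b b - g a b * g a b))"
    using pw by (intro sum.cong refl) auto
  also have "\<dots> = (\<Sum>a<2*T. Mn a - L a * L a) - E1"
    unfolding E1_def by (simp add: sum_subtractf inn)
  finally show ?thesis .
qed

lemma S0_bound: "cmod S0 \<le> real (2*T) * real (2*T) * 4"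
  unfolding S0_def
proof (rule dsum_bound, intro allI impI)
  fix a b assume a: "a < 2*T" and b: "b < 2*T"
  have g1: "cmod (g a b) \<le> 1" using g_bound a b by auto
  have "cmod (1 - (g a b)^2) \<le> 1 + cmod (g a b)^2"
    by (metis norm_one norm_power norm_triangle_ineq4)
  also have "\<dots> \<le> 2" using g1 by (simp add: power_le_one)
  finally have h: "cmod (1 - (g a b)^2) \<le> 2" .
  have "cmod (cc T a b * (2 * cc T a b * (1 - (g a b)^2))) = cmod (cc T a b) * (2 * cmod (cc T a b) * cmod (1 - (g a b)^2))"
    by (simp add: norm_mult)
  also have "\<dots> \<le> 1 * (2 * 1 * 2)"
    using cc_bound h by (intro mult_mono) auto
  finally show "cmod (cc T a b * (2 * cc T a b * (1 - (g a b)^2))) \<le> 4" by simp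
qed

lemma E1_bound: "cmod E1 \<le> real (2*T) * real (2*T) * 2"
  unfolding E1_def
proof (rule dsum_bound, intro allI impI)
  fix a b assume a: "a < 2*T" and b: "b < 2*T"
  have "cmod (C a b b - g a b * g a b) \<le> cmod (C a b b) + cmod (g a b) * cmod (g a b)"
    by (metis norm_mult norm_triangle_ineq4)
  also have "\<dots> \<le> 1 + 1 * 1"
    using C_bound g_bound a b by (intro add_mono mult_mono) auto
  finally have h: "cmod (C a b b - g a b * g a b) \<le> 2" by simp
  have "cmod (cc T a b * cc T a b * (C a b b - g a b * g a b)) = cmod (cc T a b) * cmod (cc T a b) * cmod (C a b b - g a b * g a b)"
    by (simp add: norm_mult)
  also have "\<dots> \<le> 1 * 1 * 2"
    using cc_bound h by (intro mult_mono) auto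
  finally show "cmod (cc T a b * cc T a b * (C a b b - g a b * g a b)) \<le> 2" by simp
qed

lemma L_real: "a < 2*T \<Longrightarrow> Im (L a) = 0"
proof -
  assume a: "a < 2*T"
  have "cnj (L a) = L a" unfolding L_def using g_real a by (auto intro!: sum.cong)
  then show ?thesis by (metis Reals_cnj_iff complex_is_Real_iff)
qed

lemma main_term: "a < 2*T \<Longrightarrow> cmod (\<Sum>b<2*T. \<Sum>e<2*T. sg T b * sg T e * C a b e) \<le> fro d Nm"
proof -
  assume a: "a < 2*T"
  have "(\<Sum>i<d. \<Sum>j<d. \<Sum>l<d. al a $$ (i,j) * Nm j l * Nm l i)
      = (\<Sum>i<d. \<Sum>j<d. \<Sum>l<d. \<Sum>b<2*T. \<Sum>e<2*T. sg T b * sg T e * (al a $$ (i,j) * al b $$ (j,l) * al e $$ (l,i)))"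
    unfolding Nm_def by (simp add: sum_product sum_distrib_left mult_ac)
  also have "\<dots> = (\<Sum>b<2*T. \<Sum>e<2*T. \<Sum>i<d. \<Sum>j<d. \<Sum>l<d. sg T b * sg T e * (al a $$ (i,j) * al b $$ (j,l) * al e $$ (l,i)))"
    by (simp only: sum.swap[where A="{..<d}" and B="{..<2*T}"])
  also have "\<dots> = (\<Sum>b<2*T. \<Sum>e<2*T. sg T b * sg T e * C a b e)"
    unfolding C_def c3_def by (simp add: sum_distrib_left)
  finally have eq: "(\<Sum>b<2*T. \<Sum>e<2*T. sg T b * sg T e * C a b e) = (\<Sum>i<d. \<Sum>j<d. \<Sum>l<d. al a $$ (i,j) * Nm j l * Nm l i)" by simp
  have "(cmod (\<Sum>i<d. \<Sum>j<d. \<Sum>l<d. al a $$ (i,j) * Nm j l * Nm l i))^2 \<le> fro d (\<lambda>i j. al a $$ (i,j)) * fro d Nm * fro d Nm"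
    by (rule cs3)
  also have "\<dots> \<le> 1 * fro d Nm * fro d Nm"
    using fro_al[OF a] fro_nonneg by (intro mult_right_mono) auto
  finally have "(cmod (\<Sum>i<d. \<Sum>j<d. \<Sum>l<d. al a $$ (i,j) * Nm j l * Nm l i))^2 \<le> (fro d Nm)^2"
    by (simp add: power2_eq_square)
  then show ?thesis unfolding eq by (rule power2_le_imp_le) (rule fro_nonneg)
qed

lemma Mn_bound: "a < 2*T \<Longrightarrow> cmod (Mn a) \<le> fro d Nm + 4 * real (2*T)"
proof -
  assume a: "a < 2*T"
  have pw: "cmod (cc T a b * cc T a e - sg T b * sg T e) \<le> (if b = a then 2 else 0) + (if e = a then 2 else 0)" for b e
    unfolding cc_def sg_def by auto
  have "Mn a = (\<Sum>b<2*T. \<Sum>e<2*T. sg T b * sg T e * C a b e) + (\<Sum>b<2*T. \<Sum>e<2*T. (cc T a b * cc T a e - sg T b * sg T e) * C a b e)"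
    unfolding Mn_def by (simp add: sum.distrib[symmetric] algebra_simps)
  then have "cmod (Mn a) \<le> cmod (\<Sum>b<2*T. \<Sum>e<2*T. sg T b * sg T e * C a b e) + cmod (\<Sum>b<2*T. \<Sum>e<2*T. (cc T a b * cc T a e - sg T b * sg T e) * C a b e)"
    by (simp add: norm_triangle_ineq)
  also have "cmod (\<Sum>b<2*T. \<Sum>e<2*T. (cc T a b * cc T a e - sg T b * sg T e) * C a b e) \<le> (\<Sum>b<2*T. \<Sum>e<2*T. cmod ((cc T a b * cc T a e - sg T b * sg T e) * C a b e))"
    by (rule order_trans[OF norm_sum], intro sum_mono norm_sum)
  also have "\<dots> \<le> (\<Sum>b<2*T. \<Sum>e<2*T. (if b = a then 2 else 0) + (if e = a then 2 else 0))"
  proof (intro sum_mono)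
    fix b e assume b: "b \<in> {..<2*T}" and e: "e \<in> {..<2*T}"
    have "cmod ((cc T a b * cc T a e - sg T b * sg T e) * C a b e) = cmod (cc T a b * cc T a e - sg T b * sg T e) * cmod (C a b e)"
      by (simp add: norm_mult)
    also have "\<dots> \<le> ((if b = a then 2 else 0) + (if e = a then 2 else 0)) * 1"
      using pw C_bound a b e by (intro mult_mono) auto
    finally show "cmod ((cc T a b * cc T a e - sg T b * sg T e) * C a b e) \<le> (if b = a then 2 else 0) + (if e = a then 2 else 0)" by simp
  qed
  also have "\<dots> = 4 * real (2*T)"
  proof -
    have d1: "(\<Sum>b<2*T. \<Sum>e<2*T. (if b = a then 2 else 0::real)) = (\<Sum>b<2*T. if b = a then 2 * real (2*T) else 0)"
      by (intro sum.cong refl) simp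
    also have "\<dots> = 2 * real (2*T)" using a by simp
    finally have d1: "(\<Sum>b<2*T. \<Sum>e<2*T. (if b = a then 2 else 0::real)) = 2 * real (2*T)" .
    have d2: "(\<Sum>b<2*T. \<Sum>e<2*T. (if e = a then 2 else 0::real)) = 2 * real (2*T)"
      using a by simp
    show ?thesis by (simp only: sum.distrib d1 d2)
  qed
  finally show ?thesis using main_term[OF a] by simp
qed

lemma ReV4: "Re V4 \<le> 28 * real (2*T) * real (2*T) / 4 * 4 + 4 * real (2*T) * fro d Nm"
proof -
  have "V4 = S0 + 4 * ((\<Sum>a<2*T. Mn a - L a * L a) - E1)"
    using V4_split P1_split by simp
  then have "Re V4 = Re S0 + 4 * ((\<Sum>a<2*T. Re (Mn a) - (Re (L a))^2) - Re E1)"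
    using L_real by (simp add: Re_sum power2_eq_square)
  also have "\<dots> \<le> cmod S0 + 4 * ((\<Sum>a<2*T. cmod (Mn a)) + cmod E1)"
  proof -
    have "(\<Sum>a<2*T. Re (Mn a) - (Re (L a))^2) \<le> (\<Sum>a<2*T. cmod (Mn a))"
      by (intro sum_mono) (smt (verit) complex_Re_le_cmod zero_le_power2)
    moreover have "Re S0 \<le> cmod S0" by (rule complex_Re_le_cmod)
    moreover have "- Re E1 \<le> cmod E1" using abs_Re_le_cmod[of E1] by linarith
    ultimately show ?thesis by (smt (verit))
  qed
  also have "\<dots> \<le> real (2*T) * real (2*T) * 4 + 4 * ((\<Sum>a<2*T. fro d Nm + 4 * real (2*T)) + real (2*T) * real (2*T) * 2)"
    using S0_bound E1_bound Mn_bound by (intro add_mono mult_left_mono sum_mono) auto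
  also have "\<dots> = 28 * real (2*T) * real (2*T) / 4 * 4 + 4 * real (2*T) * fro d Nm"
    by (simp add: algebra_simps)
  finally show ?thesis .
qed

lemma part2: "variance_op d (2*T) (joint_state T \<rho> \<sigma>) (Z_op T)
      \<le> complex_of_real (16 / real T * Re (mu_val d T \<rho> \<sigma>) + 112 / (real T)^2)"
proof -
  have Tpos: "real T > 0" using T1 by simp
  define F where "F = fro d Nm"
  have F0: "F \<ge> 0" unfolding F_def by (rule fro_nonneg)
  have mu: "Re (mu_val d T \<rho> \<sigma>) = F / real T ^ 2" unfolding mu_real F_def by simp
  have V: "Re V4 \<le> 112 * real T ^ 2 + 8 * real T * F"
    using ReV4 unfolding F_def by (simp add: algebra_simps power2_eq_square)
  have "(1 / of_nat T ^ 2)^2 * V4 = complex_of_real (1 / (real T ^ 2)^2) * V4" by (simp add: power_divide flip: power_mult)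
  then have "Re (variance_op d (2*T) (joint_state T \<rho> \<sigma>) (Z_op T)) = Re V4 / (real T ^ 2)^2"
    unfolding Var_V4 by simp
  also have "\<dots> \<le> (112 * real T ^ 2 + 16 * real T * F) / (real T ^ 2)^2"
  proof -
    have "0 \<le> real T * F" using F0 Tpos by simp
    then have "Re V4 \<le> 112 * real T ^ 2 + 16 * real T * F" using V by linarith
    then show ?thesis by (intro divide_right_mono) auto
  qed
  also have "\<dots> = 16 / real T * (F / real T ^ 2) + 112 / (real T)^2"
    using Tpos by (simp add: field_simps power2_eq_square)
  finally have r: "Re (variance_op d (2*T) (joint_state T \<rho> \<sigma>) (Z_op T)) \<le> 16 / real T * Re (mu_val d T \<rho> \<sigma>) + 112 / (real T)^2"
    unfolding mu .
  show ?thesis unfolding less_eq_complex_def using r Var_real by simp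
qed

end

theorem lemma9p2:
  shows "(\<forall>(d::nat) (T::nat) \<rho> \<sigma>. T \<ge> 1 \<and> (\<forall>t<T. density_mat d (\<rho> t) \<and> density_mat d (\<sigma> t)) \<longrightarrow>
            cmod (expect d (2*T) (joint_state T \<rho> \<sigma>) (Z_op T) - mu_val d T \<rho> \<sigma>) \<le> 2 / real T)
       \<and> (\<exists>K::real. \<forall>(d::nat) (T::nat) \<rho> \<sigma>. T \<ge> 1 \<and> (\<forall>t<T. density_mat d (\<rho> t) \<and> density_mat d (\<sigma> t)) \<longrightarrow>
            variance_op d (2*T) (joint_state T \<rho> \<sigma>) (Z_op T)
              \<le> complex_of_real (16 / real T * Re (mu_val d T \<rho> \<sigma>) + K / (real T)^2))"
proof
  show "\<forall>(d::nat) (T::nat) \<rho> \<sigma>. T \<ge> 1 \<and> (\<forall>t<T. density_mat d (\<rho> t) \<and> density_mat d (\<sigma> t)) \<longrightarrow>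
            cmod (expect d (2*T) (joint_state T \<rho> \<sigma>) (Z_op T) - mu_val d T \<rho> \<sigma>) \<le> 2 / real T"
  proof (intro allI impI)
    fix d T :: nat and \<rho> \<sigma> :: "nat \<Rightarrow> complex mat"
    assume h: "T \<ge> 1 \<and> (\<forall>t<T. density_mat d (\<rho> t) \<and> density_mat d (\<sigma> t))"
    interpret zc d T \<rho> \<sigma> using h by unfold_locales auto
    show "cmod (expect d (2*T) (joint_state T \<rho> \<sigma>) (Z_op T) - mu_val d T \<rho> \<sigma>) \<le> 2 / real T"
      by (rule part1)
  qed
  show "\<exists>K::real. \<forall>(d::nat) (T::nat) \<rho> \<sigma>. T \<ge> 1 \<and> (\<forall>t<T. density_mat d (\<rho> t) \<and> density_mat d (\<sigma> t)) \<longrightarrow>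
            variance_op d (2*T) (joint_state T \<rho> \<sigma>) (Z_op T)
              \<le> complex_of_real (16 / real T * Re (mu_val d T \<rho> \<sigma>) + K / (real T)^2)"
  proof (intro exI[of _ 112] allI impI)
    fix d T :: nat and \<rho> \<sigma> :: "nat \<Rightarrow> complex mat"
    assume h: "T \<ge> 1 \<and> (\<forall>t<T. density_mat d (\<rho> t) \<and> density_mat d (\<sigma> t))"
    interpret zc d T \<rho> \<sigma> using h by unfold_locales auto
    show "variance_op d (2*T) (joint_state T \<rho> \<sigma>) (Z_op T)
              \<le> complex_of_real (16 / real T * Re (mu_val d T \<rho> \<sigma>) + 112 / (real T)^2)"
      by (rule part2)
  qed
qed


end
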